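(* Fix $T$ and, for $0<s<T$, define $$X^*_s=\frac{\frac{X_s}{s}+\frac{1}{1-q}\frac{Y_T}{T}-\frac{X_T}{T}}{\frac1s+\frac{q}{1-q}\frac1T},\qquad \sigma_s^2=\frac{1}{\frac1s+\frac{q}{1-q}\frac1T}.$$ Then for every $0<\tau<t<T$, conditional on $X_t=x_t$, $Y_t=y_t$, $X_T=x_T$, $Y_T=y_T$, the random variable $Z_\tau:=X^*_\tau-Y_\tau$ is normal with $$\mathbb{E}[Z_\tau]=\frac{\sigma_\tau^2}{\sigma_t^2}\,(x^*_t-y_t),\qquad \mathrm{Var}(Z_\tau)=q(t-\tau)\Big[\frac{1}{t\tau}+\frac{q}{(1-q)T^2}\Big]\sigma_\tau^4,$$ where $x^*_t$ is the realized value of $X^*_t$.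
   Context: Fix an integer horizon $T_{max}\ge 1$ and $q\in(0,1)$. Let $X_0$ be the outcome, and let $A_1,\dots,A_{T_{max}},B_1,\dots,B_{T_{max}}$ be mutually independent random variables, independent of $X_0$, with $A_\tau\sim N(0,q)$, $B_\tau\sim N(0,1-q)$. Define $X_t=X_0+\sum_{\tau=1}^t(A_\tau+B_\tau)$ and $Y_t=X_0+\sum_{\tau=1}^t B_\tau$. ($X^*_s$ and $\sigma_s^2$ are the market's posterior mean and variance of $X_0$ at time $s$ when the expert's last truthful prediction was $Y_T$ at time $T$.) *)

theory Defs
  imports "HOL-Probability.Probability"
begin

text \<open>Sample space: (X0, A, B) with A i = A_i, B i = B_i for i in {1..Tmax}.
  X0 carries the flat (Lebesgue, improper) prior; A_i ~ N(0,q), B_i ~ N(0,1-q),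
  all mutually independent (product measure).\<close>

definition Omega :: "nat \<Rightarrow> real \<Rightarrow> (real \<times> (nat \<Rightarrow> real) \<times> (nat \<Rightarrow> real)) measure" where
  "Omega Tmax q =
     lborel \<Otimes>\<^sub>M
       ((PiM {1..Tmax} (\<lambda>_. density lborel (normal_density 0 (sqrt q)))) \<Otimes>\<^sub>M
        (PiM {1..Tmax} (\<lambda>_. density lborel (normal_density 0 (sqrt (1 - q))))))"

definition Xp :: "nat \<Rightarrow> real \<times> (nat \<Rightarrow> real) \<times> (nat \<Rightarrow> real) \<Rightarrow> real" where
  "Xp t \<omega> = fst \<omega> + (\<Sum>i\<in>{1..t}. fst (snd \<omega>) i + snd (snd \<omega>) i)"

definition Yp :: "nat \<Rightarrow> real \<times> (nat \<Rightarrow> real) \<times> (nat \<Rightarrow> real) \<Rightarrow> real" where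
  "Yp t \<omega> = fst \<omega> + (\<Sum>i\<in>{1..t}. snd (snd \<omega>) i)"

definition sigma2 :: "real \<Rightarrow> nat \<Rightarrow> nat \<Rightarrow> real" where
  "sigma2 q T s = 1 / (1 / real s + q / (1 - q) * (1 / real T))"

definition xstar :: "real \<Rightarrow> nat \<Rightarrow> nat \<Rightarrow> real \<Rightarrow> real \<Rightarrow> real \<Rightarrow> real" where
  "xstar q T s xs yT xT =
     (xs / real s + 1 / (1 - q) * (yT / real T) - xT / real T) /
     (1 / real s + q / (1 - q) * (1 / real T))"

definition Xstar :: "real \<Rightarrow> nat \<Rightarrow> nat \<Rightarrow> real \<times> (nat \<Rightarrow> real) \<times> (nat \<Rightarrow> real) \<Rightarrow> real" where
  "Xstar q T s \<omega> = xstar q T s (Xp s \<omega>) (Yp T \<omega>) (Xp T \<omega>)"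

definition normal_law :: "real \<Rightarrow> real \<Rightarrow> real measure" where
  "normal_law m v = density lborel (normal_density m (sqrt v))"

end

theory Submission
  imports Defs
begin


lemma sets_normal_law[measurable_cong, simp]: "sets (normal_law m v) = sets borel"
  by (simp add: normal_law_def)

lemma space_normal_law[simp]: "space (normal_law m v) = UNIV"
  by (simp add: normal_law_def)

lemma measurable_normal_law1[simp]: "measurable (normal_law m v) N = measurable borel N"
  by (intro measurable_cong_sets) simp_all

lemma measurable_normal_law2[simp]: "measurable N (normal_law m v) = measurable N borel"
  by (intro measurable_cong_sets) simp_all

lemma prob_space_normal_law: "0 < v \<Longrightarrow> prob_space (normal_law m v)"
  unfolding normal_law_def by (rule prob_space_normal_density) simp

lemma nn_integral_normal_law:
  assumes [measurable]: "h \<in> borel_measurable borel"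
  shows "(\<integral>\<^sup>+x. h x \<partial>normal_law m v) = (\<integral>\<^sup>+x. ennreal (normal_density m (sqrt v) x) * h x \<partial>lborel)"
  unfolding normal_law_def by (subst nn_integral_density) auto

lemma normal_law_shift:
  assumes [measurable]: "h \<in> borel_measurable borel"
  shows "(\<integral>\<^sup>+x. h x \<partial>normal_law m v) = (\<integral>\<^sup>+x. h (m + x) \<partial>normal_law 0 v)"
proof -
  have "(\<integral>\<^sup>+x. h x \<partial>normal_law m v) = (\<integral>\<^sup>+x. ennreal (normal_density m (sqrt v) x) * h x \<partial>lborel)"
    by (rule nn_integral_normal_law) simp
  also have "\<dots> = ennreal \<bar>1\<bar> * (\<integral>\<^sup>+x. ennreal (normal_density m (sqrt v) (m + 1 * x)) * h (m + 1 * x) \<partial>lborel)"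
    by (rule nn_integral_real_affine) auto
  also have "\<dots> = (\<integral>\<^sup>+x. ennreal (normal_density 0 (sqrt v) x) * h (m + x) \<partial>lborel)"
    by (simp add: normal_density_def)
  also have "\<dots> = (\<integral>\<^sup>+x. h (m + x) \<partial>normal_law 0 v)"
    by (rule nn_integral_normal_law[symmetric]) simp
  finally show ?thesis .
qed

lemma normal_law_scale:
  assumes [measurable]: "h \<in> borel_measurable borel" and k: "k \<noteq> 0" and v: "0 < v"
  shows "(\<integral>\<^sup>+x. h (k * x) \<partial>normal_law 0 v) = (\<integral>\<^sup>+x. h x \<partial>normal_law 0 (k\<^sup>2 * v))"
proof -
  have eq: "\<bar>k\<bar> * normal_density 0 (sqrt (k\<^sup>2 * v)) (k * x) = normal_density 0 (sqrt v) x" for x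
    using k v by (simp add: normal_density_def real_sqrt_mult field_simps power2_eq_square)
  have "(\<integral>\<^sup>+x. h x \<partial>normal_law 0 (k\<^sup>2 * v)) = (\<integral>\<^sup>+x. ennreal (normal_density 0 (sqrt (k\<^sup>2 * v)) x) * h x \<partial>lborel)"
    by (rule nn_integral_normal_law) simp
  also have "\<dots> = ennreal \<bar>k\<bar> * (\<integral>\<^sup>+x. ennreal (normal_density 0 (sqrt (k\<^sup>2 * v)) (0 + k * x)) * h (0 + k * x) \<partial>lborel)"
    by (rule nn_integral_real_affine) (auto simp: k)
  also have "\<dots> = (\<integral>\<^sup>+x. ennreal (\<bar>k\<bar> * normal_density 0 (sqrt (k\<^sup>2 * v)) (k * x)) * h (k * x) \<partial>lborel)"
    by (subst nn_integral_cmult[symmetric]) (auto simp: ennreal_mult' mult.assoc)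
  also have "\<dots> = (\<integral>\<^sup>+x. h (k * x) \<partial>normal_law 0 v)"
    by (subst nn_integral_normal_law) (auto simp: eq)
  finally show ?thesis ..
qed



lemma normal_law_neg: "normal_density m (sqrt v) = normal_density m (sqrt \<bar>v\<bar>)"
proof -
  have "(sqrt v)\<^sup>2 = \<bar>v\<bar>" by (simp add: power2_eq_square real_sqrt_mult_self)
  then show ?thesis by (auto simp: normal_density_def fun_eq_iff)
qed

lemma prob_space_normal_law': "v \<noteq> 0 \<Longrightarrow> prob_space (normal_law m v)"
  unfolding normal_law_def by (subst normal_law_neg) (rule prob_space_normal_density, simp)

lemma sigma_finite_normal_law: "sigma_finite_measure (normal_law m v)"
proof cases
  assume "v = 0"
  then have "normal_law m v = null_measure lborel"
    by (simp add: normal_law_def normal_density_def null_measure_eq_density)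
  then show ?thesis
    using finite_measure.axioms(1)[of "null_measure lborel"] finite_measureI[of "null_measure lborel"] by simp
next
  assume "v \<noteq> 0"
  then interpret prob_space "normal_law m v" by (rule prob_space_normal_law')
  show ?thesis ..
qed

lemma borel_measurable_nn_integral_normal_law[measurable (raw)]:
  "case_prod f \<in> borel_measurable (N \<Otimes>\<^sub>M normal_law m v) \<Longrightarrow> (\<lambda>x. \<integral>\<^sup>+ y. f x y \<partial>normal_law m v) \<in> borel_measurable N"
  by (rule sigma_finite_measure.borel_measurable_nn_integral[OF sigma_finite_normal_law])

lemma swap_normal:
  assumes "case_prod f \<in> borel_measurable (borel \<Otimes>\<^sub>M borel)"
  shows "(\<integral>\<^sup>+x. \<integral>\<^sup>+y. f x y \<partial>normal_law m2 v2 \<partial>normal_law m1 v1) = (\<integral>\<^sup>+y. \<integral>\<^sup>+x. f x y \<partial>normal_law m1 v1 \<partial>normal_law m2 v2)"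
proof -
  interpret pair_sigma_finite "normal_law m1 v1" "normal_law m2 v2"
    by (intro pair_sigma_finite.intro sigma_finite_normal_law)
  show ?thesis using assms by (intro Fubini'[symmetric]) simp
qed

lemma normal_density_split:
  assumes a: "0 < a" and b: "0 < b"
  shows "normal_density 0 (sqrt a) x * normal_density 0 (sqrt b) (s - x) =
         normal_density 0 (sqrt (a + b)) s * normal_density 0 (sqrt (a * b / (a + b))) (x - a / (a + b) * s)"
proof -
  have ab: "0 < a + b" using a b by simp
  have pre: "sqrt (2 * pi * a) * sqrt (2 * pi * b) = sqrt (2 * pi * (a + b)) * sqrt (2 * pi * (a * b / (a + b)))"
    using a b ab by (simp add: real_sqrt_mult[symmetric] field_simps)
  have ex: "- x\<^sup>2 / (2 * a) + - (s - x)\<^sup>2 / (2 * b) = - s\<^sup>2 / (2 * (a + b)) + - (x - a / (a + b) * s)\<^sup>2 / (2 * (a * b / (a + b)))"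
    using a b ab apply (simp add: power_divide divide_simps)
    apply algebra done
  have nd: "normal_density 0 (sqrt c) y = exp (- y\<^sup>2 / (2 * c)) / sqrt (2 * pi * c)" if "0 < c" for c y
    using that by (simp add: normal_density_def)
  have v: "0 < a * b / (a + b)" using a b by simp
  have "normal_density 0 (sqrt a) x * normal_density 0 (sqrt b) (s - x) =
     exp (- x\<^sup>2 / (2 * a) + - (s - x)\<^sup>2 / (2 * b)) / (sqrt (2 * pi * a) * sqrt (2 * pi * b))"
    using a b by (simp add: nd exp_add[symmetric])
  also have "\<dots> = exp (- s\<^sup>2 / (2 * (a + b)) + - (x - a / (a + b) * s)\<^sup>2 / (2 * (a * b / (a + b)))) /
     (sqrt (2 * pi * (a + b)) * sqrt (2 * pi * (a * b / (a + b))))"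
    by (simp only: ex pre)
  also have "\<dots> = normal_density 0 (sqrt (a + b)) s * normal_density 0 (sqrt (a * b / (a + b))) (x - a / (a + b) * s)"
    using ab v by (simp only: nd exp_add) simp
  finally show ?thesis .
qed



lemma L2:
  assumes a: "0 < a" and b: "0 < b"
    and F[measurable]: "case_prod F \<in> borel_measurable (borel \<Otimes>\<^sub>M borel)"
  shows "(\<integral>\<^sup>+x. \<integral>\<^sup>+y. F (x + y) x \<partial>normal_law 0 b \<partial>normal_law 0 a) =
         (\<integral>\<^sup>+s. \<integral>\<^sup>+e. F s (e + a / (a + b) * s) \<partial>normal_law 0 (a * b / (a + b)) \<partial>normal_law 0 (a + b))"
proof -
  define v where "v = a * b / (a + b)"
  define c where "c = a / (a + b)"
  let ?na = "\<lambda>x. ennreal (normal_density 0 (sqrt a) x)"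
  let ?nb = "\<lambda>x. ennreal (normal_density 0 (sqrt b) x)"
  let ?nab = "\<lambda>x. ennreal (normal_density 0 (sqrt (a + b)) x)"
  let ?nv = "\<lambda>x. ennreal (normal_density 0 (sqrt v) x)"
  have 1: "(\<integral>\<^sup>+y. F (x + y) x \<partial>normal_law 0 b) = (\<integral>\<^sup>+s. ?nb (s - x) * F s x \<partial>lborel)" for x
  proof -
    have "(\<integral>\<^sup>+s. ?nb (s - x) * F s x \<partial>lborel) = ennreal \<bar>1\<bar> * (\<integral>\<^sup>+y. ?nb ((x + 1 * y) - x) * F (x + 1 * y) x \<partial>lborel)"
      by (rule nn_integral_real_affine) auto
    also have "\<dots> = (\<integral>\<^sup>+y. F (x + y) x \<partial>normal_law 0 b)"
      by (subst nn_integral_normal_law) auto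
    finally show ?thesis ..
  qed
  have "(\<integral>\<^sup>+x. \<integral>\<^sup>+y. F (x + y) x \<partial>normal_law 0 b \<partial>normal_law 0 a) =
        (\<integral>\<^sup>+x. ?na x * (\<integral>\<^sup>+s. ?nb (s - x) * F s x \<partial>lborel) \<partial>lborel)"
    by (subst nn_integral_normal_law) (auto simp: 1)
  also have "\<dots> = (\<integral>\<^sup>+x. \<integral>\<^sup>+s. ?na x * ?nb (s - x) * F s x \<partial>lborel \<partial>lborel)"
    by (subst nn_integral_cmult[symmetric]) (auto simp: mult.assoc)
  also have "\<dots> = (\<integral>\<^sup>+s. \<integral>\<^sup>+x. ?na x * ?nb (s - x) * F s x \<partial>lborel \<partial>lborel)"
    by (rule lborel_pair.Fubini'[symmetric]) simp
  also have "\<dots> = (\<integral>\<^sup>+s. \<integral>\<^sup>+x. ?nab s * (?nv (x - c * s) * F s x) \<partial>lborel \<partial>lborel)"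
  proof (intro nn_integral_cong)
    fix s x
    have "?na x * ?nb (s - x) = ?nab s * ?nv (x - c * s)"
      using normal_density_split[OF a b, of x s]
      by (simp add: v_def c_def ennreal_mult[symmetric])
    then show "?na x * ?nb (s - x) * F s x = ?nab s * (?nv (x - c * s) * F s x)"
      by (simp add: mult.assoc[symmetric])
  qed
  also have "\<dots> = (\<integral>\<^sup>+s. ?nab s * (\<integral>\<^sup>+x. ?nv (x - c * s) * F s x \<partial>lborel) \<partial>lborel)"
    by (subst nn_integral_cmult) auto
  also have "\<dots> = (\<integral>\<^sup>+s. ?nab s * (\<integral>\<^sup>+e. F s (e + c * s) \<partial>normal_law 0 v) \<partial>lborel)"
  proof (intro nn_integral_cong arg_cong2[where f="(*)"] refl)
    fix s
    have "(\<integral>\<^sup>+x. ?nv (x - c * s) * F s x \<partial>lborel) = ennreal \<bar>1\<bar> * (\<integral>\<^sup>+e. ?nv ((c * s + 1 * e) - c * s) * F s (c * s + 1 * e) \<partial>lborel)"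
      by (rule nn_integral_real_affine) auto
    also have "\<dots> = (\<integral>\<^sup>+e. F s (e + c * s) \<partial>normal_law 0 v)"
      by (subst nn_integral_normal_law) (auto simp: add.commute)
    finally show "(\<integral>\<^sup>+x. ?nv (x - c * s) * F s x \<partial>lborel) = (\<integral>\<^sup>+e. F s (e + c * s) \<partial>normal_law 0 v)" .
  qed
  also have "\<dots> = (\<integral>\<^sup>+s. \<integral>\<^sup>+e. F s (e + c * s) \<partial>normal_law 0 v \<partial>normal_law 0 (a + b))"
    by (subst (2) nn_integral_normal_law) auto
  finally show ?thesis by (simp add: v_def c_def)
qed



lemma normal_law_UNIV[simp]: "v \<noteq> 0 \<Longrightarrow> emeasure (normal_law m v) UNIV = 1"
  using prob_space.emeasure_space_1[OF prob_space_normal_law', of v m] by simp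

lemma normal_law_const[simp]: "v \<noteq> 0 \<Longrightarrow> (\<integral>\<^sup>+x. c \<partial>normal_law m v) = c"
  using prob_space.emeasure_space_1[OF prob_space_normal_law'] by simp

lemma N3:
  assumes a: "0 < a" and b: "0 < b" and h[measurable]: "h \<in> borel_measurable borel"
  shows "(\<integral>\<^sup>+x. \<integral>\<^sup>+y. h (x + y) \<partial>normal_law 0 b \<partial>normal_law 0 a) = (\<integral>\<^sup>+s. h s \<partial>normal_law 0 (a + b))"
proof -
  have v: "a * b / (a + b) \<noteq> 0" using a b by simp
  show ?thesis
    using L2[OF a b, of "\<lambda>s x. h s"] v by simp
qed

lemma N4:
  assumes v1: "0 < v1" and v2: "0 < v2" and k1: "k1 \<noteq> 0" and k2: "k2 \<noteq> 0"
    and f[measurable]: "f \<in> borel_measurable borel"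
  shows "(\<integral>\<^sup>+e. \<integral>\<^sup>+y. f (k1 * e + k2 * y + m) \<partial>normal_law 0 v2 \<partial>normal_law 0 v1) =
         (\<integral>\<^sup>+x. f (m + x) \<partial>normal_law 0 (k1\<^sup>2 * v1 + k2\<^sup>2 * v2))"
proof -
  have p1: "0 < k1\<^sup>2 * v1" and p2: "0 < k2\<^sup>2 * v2" using v1 v2 k1 k2 by auto
  have "(\<integral>\<^sup>+e. \<integral>\<^sup>+y. f (k1 * e + k2 * y + m) \<partial>normal_law 0 v2 \<partial>normal_law 0 v1) =
        (\<integral>\<^sup>+e. \<integral>\<^sup>+y. f (k1 * e + y + m) \<partial>normal_law 0 (k2\<^sup>2 * v2) \<partial>normal_law 0 v1)"
    by (intro nn_integral_cong normal_law_scale[OF _ k2 v2, of "\<lambda>y. f (_ + y + m)"]) simp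
  also have "\<dots> = (\<integral>\<^sup>+w. \<integral>\<^sup>+y. f (w + y + m) \<partial>normal_law 0 (k2\<^sup>2 * v2) \<partial>normal_law 0 (k1\<^sup>2 * v1))"
    by (rule normal_law_scale[OF _ k1 v1, of "\<lambda>w. \<integral>\<^sup>+y. f (w + y + m) \<partial>normal_law 0 (k2\<^sup>2 * v2)"]) simp
  also have "\<dots> = (\<integral>\<^sup>+s. f (m + s) \<partial>normal_law 0 (k1\<^sup>2 * v1 + k2\<^sup>2 * v2))"
    using N3[OF p1 p2, of "\<lambda>s. f (m + s)"] by (simp add: ac_simps)
  finally show ?thesis .
qed



lemma product_prob_space_normal: "0 < s \<Longrightarrow> product_prob_space (\<lambda>_. normal_law 0 s)"
  by (intro product_prob_space.intro product_sigma_finite.intro product_prob_space_axioms.intro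
      sigma_finite_normal_law prob_space_normal_law)

lemma block1:
  assumes "finite I" "I \<noteq> {}" and s: "0 < s" and h: "h \<in> borel_measurable borel"
  shows "(\<integral>\<^sup>+z. h (\<Sum>i\<in>I. z i) \<partial>PiM I (\<lambda>_. normal_law 0 s)) = (\<integral>\<^sup>+u. h u \<partial>normal_law 0 (real (card I) * s))"
  using assms(1,2) h
proof (induction I arbitrary: h rule: finite_ne_induct)
  case (singleton i)
  interpret product_prob_space "\<lambda>_. normal_law 0 s" by (rule product_prob_space_normal[OF s])
  show ?case using singleton by (simp add: product_nn_integral_singleton)
next
  case (insert i I)
  note [measurable] = insert.prems
  interpret product_prob_space "\<lambda>_. normal_law 0 s" by (rule product_prob_space_normal[OF s])
  have cI: "0 < real (card I) * s" using insert s by (simp add: card_gt_0_iff)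
  have "(\<integral>\<^sup>+z. h (\<Sum>j\<in>insert i I. z j) \<partial>PiM (insert i I) (\<lambda>_. normal_law 0 s)) =
        (\<integral>\<^sup>+x. \<integral>\<^sup>+y. h (\<Sum>j\<in>insert i I. (x(i := y)) j) \<partial>normal_law 0 s \<partial>PiM I (\<lambda>_. normal_law 0 s))"
    by (rule product_nn_integral_insert) (use insert in auto)
  also have "\<dots> = (\<integral>\<^sup>+x. (\<lambda>w. \<integral>\<^sup>+y. h (w + y) \<partial>normal_law 0 s) (\<Sum>j\<in>I. x j) \<partial>PiM I (\<lambda>_. normal_law 0 s))"
  proof (rule nn_integral_cong)
    fix x :: "'a \<Rightarrow> real" assume "x \<in> space (PiM I (\<lambda>_. normal_law 0 s))"
    have "(\<Sum>j\<in>insert i I. (x(i := y)) j) = (\<Sum>j\<in>I. x j) + y" for y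
    proof -
      have "(\<Sum>j\<in>insert i I. (x(i := y)) j) = (x(i := y)) i + (\<Sum>j\<in>I. (x(i := y)) j)"
        using insert by (intro sum.insert) auto
      also have "(\<Sum>j\<in>I. (x(i := y)) j) = (\<Sum>j\<in>I. x j)"
        using insert by (intro sum.cong) auto
      finally show ?thesis by (simp add: add.commute)
    qed
    then show "(\<integral>\<^sup>+y. h (\<Sum>j\<in>insert i I. (x(i := y)) j) \<partial>normal_law 0 s) = (\<lambda>w. \<integral>\<^sup>+y. h (w + y) \<partial>normal_law 0 s) (\<Sum>j\<in>I. x j)"
      by simp
  qed
  also have "\<dots> = (\<integral>\<^sup>+w. \<integral>\<^sup>+y. h (w + y) \<partial>normal_law 0 s \<partial>normal_law 0 (real (card I) * s))"
    by (rule insert.IH) simp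
  also have "\<dots> = (\<integral>\<^sup>+u. h u \<partial>normal_law 0 (real (card I) * s + s))"
    by (rule N3[OF cI s]) simp
  finally show ?case using insert by (simp add: algebra_simps)
qed



lemma foldS:
  fixes h :: "real \<times> real \<times> real \<Rightarrow> ennreal"
  assumes IJ: "I \<inter> J = {}" "finite I" "finite J" and sub: "I1 \<subseteq> I" "J2 \<subseteq> J" "J3 \<subseteq> J"
    and s: "0 < s" and h[measurable]: "h \<in> borel_measurable borel"
  shows "(\<integral>\<^sup>+z. h (\<Sum>i\<in>I1. z i, \<Sum>i\<in>J2. z i, \<Sum>i\<in>J3. z i) \<partial>PiM (I \<union> J) (\<lambda>_. normal_law 0 s)) =
         (\<integral>\<^sup>+x. \<integral>\<^sup>+y. h (\<Sum>i\<in>I1. x i, \<Sum>i\<in>J2. y i, \<Sum>i\<in>J3. y i) \<partial>PiM J (\<lambda>_. normal_law 0 s) \<partial>PiM I (\<lambda>_. normal_law 0 s))"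
proof -
  interpret product_prob_space "\<lambda>_. normal_law 0 s" by (rule product_prob_space_normal[OF s])
  have fI: "finite I1" "finite J2" "finite J3" using sub IJ by (auto intro: finite_subset)
  show ?thesis
  proof (subst product_nn_integral_fold[OF IJ], goal_cases)
    case 1
    have m: "(\<lambda>x. \<Sum>i\<in>A. x i) \<in> borel_measurable (PiM (I \<union> J) (\<lambda>_. normal_law 0 s))" if "A \<subseteq> I \<union> J" for A
      using that by (intro borel_measurable_sum) auto
    have [measurable]: "(\<lambda>x. \<Sum>i\<in>I1. x i) \<in> borel_measurable (PiM (I \<union> J) (\<lambda>_. normal_law 0 s))"
      "(\<lambda>x. \<Sum>i\<in>J2. x i) \<in> borel_measurable (PiM (I \<union> J) (\<lambda>_. normal_law 0 s))"
      "(\<lambda>x. \<Sum>i\<in>J3. x i) \<in> borel_measurable (PiM (I \<union> J) (\<lambda>_. normal_law 0 s))"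
      using sub by (auto intro!: m)
    show ?case using sub by measurable
  next
    case 2
    show ?case
    proof (intro nn_integral_cong)
      fix x y :: "'a \<Rightarrow> real"
      have "(\<Sum>i\<in>I1. merge I J (x, y) i) = (\<Sum>i\<in>I1. x i)"
        using sub IJ by (intro sum.cong) auto
      moreover have "(\<Sum>i\<in>J2. merge I J (x, y) i) = (\<Sum>i\<in>J2. y i)"
        using sub IJ by (intro sum.cong) auto
      moreover have "(\<Sum>i\<in>J3. merge I J (x, y) i) = (\<Sum>i\<in>J3. y i)"
        using sub IJ by (intro sum.cong) auto
      ultimately show "h (\<Sum>i\<in>I1. merge I J (x, y) i, \<Sum>i\<in>J2. merge I J (x, y) i, \<Sum>i\<in>J3. merge I J (x, y) i) =
                       h (\<Sum>i\<in>I1. x i, \<Sum>i\<in>J2. y i, \<Sum>i\<in>J3. y i)" by simp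
    qed
  qed
qed



lemma borel_fst[measurable]: "(\<lambda>x::('a::second_countable_topology \<times> 'b::second_countable_topology). fst x) \<in> borel_measurable borel"
  by (subst borel_prod[symmetric]) simp

lemma borel_snd[measurable]: "(\<lambda>x::('a::second_countable_topology \<times> 'b::second_countable_topology). snd x) \<in> borel_measurable borel"
  by (subst borel_prod[symmetric]) simp

lemma PiM_normal_const[simp]:
  "0 < s \<Longrightarrow> emeasure (PiM J (\<lambda>_. normal_law 0 s)) (space (PiM J (\<lambda>_. normal_law 0 s))) = 1"
proof -
  assume s: "0 < s"
  interpret prob_space "PiM J (\<lambda>_. normal_law 0 s)"
    by (rule prob_space_PiM) (rule prob_space_normal_law[OF s])
  show ?thesis by (simp add: emeasure_space_1)
qed

lemma block3:
  fixes h :: "real \<times> real \<times> real \<Rightarrow> ennreal"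
  assumes K: "finite K" and sub: "I1 \<subseteq> K" "I2 \<subseteq> K" "I3 \<subseteq> K"
    and disj: "I1 \<inter> I2 = {}" "I1 \<inter> I3 = {}" "I2 \<inter> I3 = {}"
    and ne: "I1 \<noteq> {}" "I2 \<noteq> {}" "I3 \<noteq> {}" and s: "0 < s"
    and h[measurable]: "h \<in> borel_measurable borel"
  shows "(\<integral>\<^sup>+z. h (\<Sum>i\<in>I1. z i, \<Sum>i\<in>I2. z i, \<Sum>i\<in>I3. z i) \<partial>PiM K (\<lambda>_. normal_law 0 s)) =
    (\<integral>\<^sup>+u1. \<integral>\<^sup>+u2. \<integral>\<^sup>+u3. h (u1, u2, u3) \<partial>normal_law 0 (real (card I3) * s)
        \<partial>normal_law 0 (real (card I2) * s) \<partial>normal_law 0 (real (card I1) * s))"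
proof -
  let ?M = "\<lambda>A. PiM A (\<lambda>_. normal_law 0 s)"
  have fin: "finite I1" "finite I2" "finite I3" using K sub by (auto intro: finite_subset)
  have e1: "K = I1 \<union> (K - I1)" using sub by auto
  have e2: "K - I1 = I2 \<union> (K - I1 - I2)" using sub disj by auto
  have e3: "K - I1 - I2 = I3 \<union> (K - I1 - I2 - I3)" using sub disj by auto
  have step1: "(\<integral>\<^sup>+z. h (\<Sum>i\<in>I1. z i, \<Sum>i\<in>I2. z i, \<Sum>i\<in>I3. z i) \<partial>?M K) =
     (\<integral>\<^sup>+x. \<integral>\<^sup>+y. h (\<Sum>i\<in>I1. x i, \<Sum>i\<in>I2. y i, \<Sum>i\<in>I3. y i) \<partial>?M (K - I1) \<partial>?M I1)"
    apply (subst e1)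
    apply (rule foldS)
    using K fin sub disj s by auto
  have step2: "(\<integral>\<^sup>+y. h (c, \<Sum>i\<in>I2. y i, \<Sum>i\<in>I3. y i) \<partial>?M (K - I1)) =
     (\<integral>\<^sup>+x. \<integral>\<^sup>+y. h (c, \<Sum>i\<in>I2. x i, \<Sum>i\<in>I3. y i) \<partial>?M (K - I1 - I2) \<partial>?M I2)" for c
  proof -
    have "(\<integral>\<^sup>+z. (\<lambda>p. h (c, fst p, fst (snd p))) (\<Sum>i\<in>I2. z i, \<Sum>i\<in>I3. z i, \<Sum>i\<in>I3. z i) \<partial>?M (I2 \<union> (K - I1 - I2))) =
      (\<integral>\<^sup>+x. \<integral>\<^sup>+y. (\<lambda>p. h (c, fst p, fst (snd p))) (\<Sum>i\<in>I2. x i, \<Sum>i\<in>I3. y i, \<Sum>i\<in>I3. y i) \<partial>?M (K - I1 - I2) \<partial>?M I2)"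
      apply (rule foldS)
      using K fin sub disj s apply auto[7]
      by measurable
    then show ?thesis by (simp only: e2[symmetric] fst_conv snd_conv)
  qed
  have step3: "(\<integral>\<^sup>+y. h (c, d, \<Sum>i\<in>I3. y i) \<partial>?M (K - I1 - I2)) =
     (\<integral>\<^sup>+x. h (c, d, \<Sum>i\<in>I3. x i) \<partial>?M I3)" for c d
  proof -
    have "(\<integral>\<^sup>+z. (\<lambda>p. h (c, d, fst p)) (\<Sum>i\<in>I3. z i, \<Sum>i\<in>{}. z i, \<Sum>i\<in>{}. z i) \<partial>?M (I3 \<union> (K - I1 - I2 - I3))) =
      (\<integral>\<^sup>+x. \<integral>\<^sup>+y. (\<lambda>p. h (c, d, fst p)) (\<Sum>i\<in>I3. x i, \<Sum>i\<in>{}. y i, \<Sum>i\<in>{}. y i) \<partial>?M (K - I1 - I2 - I3) \<partial>?M I3)"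
      apply (rule foldS)
      using K fin sub disj s apply auto[7]
      by measurable
    then show ?thesis using s by (simp only: e3[symmetric] fst_conv) simp
  qed
  have "(\<integral>\<^sup>+z. h (\<Sum>i\<in>I1. z i, \<Sum>i\<in>I2. z i, \<Sum>i\<in>I3. z i) \<partial>?M K) =
     (\<integral>\<^sup>+x. \<integral>\<^sup>+x2. \<integral>\<^sup>+x3. h (\<Sum>i\<in>I1. x i, \<Sum>i\<in>I2. x2 i, \<Sum>i\<in>I3. x3 i) \<partial>?M I3 \<partial>?M I2 \<partial>?M I1)"
    unfolding step1 step2 step3 ..
  also have "\<dots> = (\<integral>\<^sup>+x. \<integral>\<^sup>+x2. \<integral>\<^sup>+u3. h (\<Sum>i\<in>I1. x i, \<Sum>i\<in>I2. x2 i, u3) \<partial>normal_law 0 (real (card I3) * s) \<partial>?M I2 \<partial>?M I1)"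
    using fin ne s by (intro nn_integral_cong block1[where h="\<lambda>u3. h (_, _, u3)"]) auto
  also have "\<dots> = (\<integral>\<^sup>+x. \<integral>\<^sup>+u2. \<integral>\<^sup>+u3. h (\<Sum>i\<in>I1. x i, u2, u3) \<partial>normal_law 0 (real (card I3) * s) \<partial>normal_law 0 (real (card I2) * s) \<partial>?M I1)"
    using fin ne s by (subst block1[where h="\<lambda>u2. \<integral>\<^sup>+u3. h (_, u2, u3) \<partial>normal_law 0 (real (card I3) * s)"]) auto
  also have "\<dots> = (\<integral>\<^sup>+u1. \<integral>\<^sup>+u2. \<integral>\<^sup>+u3. h (u1, u2, u3) \<partial>normal_law 0 (real (card I3) * s) \<partial>normal_law 0 (real (card I2) * s) \<partial>normal_law 0 (real (card I1) * s))"
    using fin ne s by (subst block1[where h="\<lambda>u1. \<integral>\<^sup>+u2. \<integral>\<^sup>+u3. h (u1, u2, u3) \<partial>normal_law 0 (real (card I3) * s) \<partial>normal_law 0 (real (card I2) * s)"]) auto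
  finally show ?thesis .
qed



definition SS :: "nat \<Rightarrow> nat \<Rightarrow> nat \<Rightarrow> (nat \<Rightarrow> real) \<Rightarrow> real \<times> real \<times> real" where
  "SS k1 k2 k3 z = (\<Sum>i\<in>{1..k1}. z i, \<Sum>i\<in>{k1<..k2}. z i, \<Sum>i\<in>{k2<..k3}. z i)"

lemma sum_meas_PiM:
  "I \<subseteq> K \<Longrightarrow> (\<lambda>z. \<Sum>i\<in>I. z i) \<in> borel_measurable (PiM K (\<lambda>_. normal_law 0 s))"
  by (intro borel_measurable_sum) auto

lemma SS_meas:
  assumes "k1 \<le> k2" "k2 \<le> k3" "k3 \<le> N"
  shows "SS k1 k2 k3 \<in> borel_measurable (PiM {1..N} (\<lambda>_. normal_law 0 s))"
  unfolding SS_def using assms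
  by (intro borel_measurable_Pair sum_meas_PiM; auto)

lemma meas_triple:
  fixes \<Phi> :: "'a::second_countable_topology \<times> 'b::second_countable_topology \<times> 'c::second_countable_topology \<Rightarrow> 'd::topological_space"
  assumes "\<Phi> \<in> borel_measurable borel" "a \<in> borel_measurable M" "b \<in> borel_measurable M" "c \<in> borel_measurable M"
  shows "(\<lambda>x. \<Phi> (a x, b x, c x)) \<in> borel_measurable M"
  by (rule measurable_compose[OF _ assms(1)]) (intro borel_measurable_Pair assms)

lemma block3SS:
  fixes h :: "real \<times> real \<times> real \<Rightarrow> ennreal"
  assumes k: "0 < k1" "k1 < k2" "k2 < k3" "k3 \<le> N" and s: "0 < s" and h[measurable]: "h \<in> borel_measurable borel"
  shows "(\<integral>\<^sup>+z. h (SS k1 k2 k3 z) \<partial>PiM {1..N} (\<lambda>_. normal_law 0 s)) =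
    (\<integral>\<^sup>+u1. \<integral>\<^sup>+u2. \<integral>\<^sup>+u3. h (u1, u2, u3) \<partial>normal_law 0 (real (k3 - k2) * s)
        \<partial>normal_law 0 (real (k2 - k1) * s) \<partial>normal_law 0 (real k1 * s))"
proof -
  have sets: "{1..k1} \<subseteq> {1..N}" "{k1<..k2} \<subseteq> {1..N}" "{k2<..k3} \<subseteq> {1..N}"
    "{1..k1} \<inter> {k1<..k2} = {}" "{1..k1} \<inter> {k2<..k3} = {}" "{k1<..k2} \<inter> {k2<..k3} = {}"
    "{1..k1} \<noteq> {}" "{k1<..k2} \<noteq> {}" "{k2<..k3} \<noteq> {}"
    using k by auto
  show ?thesis
    unfolding SS_def using block3[OF _ sets s h] k by (simp add: of_nat_diff)
qed

lemma Omega_eq: "Omega Tmax q = lborel \<Otimes>\<^sub>M (PiM {1..Tmax} (\<lambda>_. normal_law 0 q) \<Otimes>\<^sub>M PiM {1..Tmax} (\<lambda>_. normal_law 0 (1 - q)))"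
  unfolding Omega_def normal_law_def ..

lemma R:
  fixes \<Phi> :: "real \<times> (real \<times> real \<times> real) \<times> (real \<times> real \<times> real) \<Rightarrow> ennreal"
  assumes \<Phi>[measurable]: "\<Phi> \<in> borel_measurable borel"
    and q: "0 < q" "q < 1" and k: "0 < k1" "k1 < k2" "k2 < k3" "k3 \<le> N"
  shows "(\<integral>\<^sup>+\<omega>. \<Phi> (fst \<omega>, SS k1 k2 k3 (fst (snd \<omega>)), SS k1 k2 k3 (snd (snd \<omega>))) \<partial>Omega N q) =
    (\<integral>\<^sup>+u. \<integral>\<^sup>+a1. \<integral>\<^sup>+a2. \<integral>\<^sup>+a3. \<integral>\<^sup>+b1. \<integral>\<^sup>+b2. \<integral>\<^sup>+b3.
        \<Phi> (u - b1 - b2, (a1, a2, a3), (b1, b2, b3))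
      \<partial>normal_law 0 (real (k3 - k2) * (1 - q)) \<partial>normal_law 0 (real (k2 - k1) * (1 - q)) \<partial>normal_law 0 (real k1 * (1 - q))
      \<partial>normal_law 0 (real (k3 - k2) * q) \<partial>normal_law 0 (real (k2 - k1) * q) \<partial>normal_law 0 (real k1 * q) \<partial>lborel)"
proof -
  define PA where "PA = PiM {1..N} (\<lambda>_. normal_law 0 q)"
  define PB where "PB = PiM {1..N} (\<lambda>_. normal_law 0 (1 - q))"
  have q': "0 < 1 - q" using q by simp
  interpret PA: prob_space PA unfolding PA_def by (rule prob_space_PiM) (rule prob_space_normal_law[OF q(1)])
  interpret PB: prob_space PB unfolding PB_def by (rule prob_space_PiM) (rule prob_space_normal_law[OF q'])
  interpret PAB: pair_prob_space PA PB ..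
  interpret LP: pair_sigma_finite lborel "PA \<Otimes>\<^sub>M PB"
    by (intro pair_sigma_finite.intro lborel.sigma_finite_measure_axioms PAB.P.sigma_finite_measure_axioms)
  define SB where "SB = SS k1 k2 k3"
  define SA where "SA = SS k1 k2 k3"
  have mA[measurable]: "SA \<in> borel_measurable PA" unfolding PA_def SA_def by (rule SS_meas) (use k in auto)
  have mB[measurable]: "SB \<in> borel_measurable PB" unfolding PB_def SB_def by (rule SS_meas) (use k in auto)
  have "(\<integral>\<^sup>+\<omega>. \<Phi> (fst \<omega>, SA (fst (snd \<omega>)), SB (snd (snd \<omega>))) \<partial>Omega N q) =
        (\<integral>\<^sup>+p. \<integral>\<^sup>+x. \<Phi> (x, SA (fst p), SB (snd p)) \<partial>lborel \<partial>(PA \<Otimes>\<^sub>M PB))"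
    unfolding Omega_eq PA_def[symmetric] PB_def[symmetric]
    apply (subst LP.nn_integral_snd[symmetric]) apply measurable done
  also have "\<dots> = (\<integral>\<^sup>+p. \<integral>\<^sup>+u. \<Phi> (u - fst (SB (snd p)) - fst (snd (SB (snd p))), SA (fst p), SB (snd p)) \<partial>lborel \<partial>(PA \<Otimes>\<^sub>M PB))"
  proof (rule nn_integral_cong)
    fix p :: "(nat \<Rightarrow> real) \<times> (nat \<Rightarrow> real)"
    obtain b1 b2 b3 where B: "SB (snd p) = (b1, b2, b3)" by (cases "SB (snd p)") auto
    have "(\<integral>\<^sup>+x. \<Phi> (x, SA (fst p), SB (snd p)) \<partial>lborel) =
          ennreal \<bar>1\<bar> * (\<integral>\<^sup>+u. \<Phi> (- (b1 + b2) + 1 * u, SA (fst p), SB (snd p)) \<partial>lborel)"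
      apply (rule nn_integral_real_affine) apply (rule meas_triple[OF \<Phi>]; measurable) by simp
    then show "(\<integral>\<^sup>+x. \<Phi> (x, SA (fst p), SB (snd p)) \<partial>lborel) =
       (\<integral>\<^sup>+u. \<Phi> (u - fst (SB (snd p)) - fst (snd (SB (snd p))), SA (fst p), SB (snd p)) \<partial>lborel)"
      by (simp add: B algebra_simps)
  qed
  also have "\<dots> = (\<integral>\<^sup>+u. \<integral>\<^sup>+p. \<Phi> (u - fst (SB (snd p)) - fst (snd (SB (snd p))), SA (fst p), SB (snd p)) \<partial>(PA \<Otimes>\<^sub>M PB) \<partial>lborel)"
    by (rule LP.Fubini') (unfold case_prod_beta, rule meas_triple[OF \<Phi>]; measurable)
  also have "\<dots> = (\<integral>\<^sup>+u. \<integral>\<^sup>+za. \<integral>\<^sup>+zb. \<Phi> (u - fst (SB zb) - fst (snd (SB zb)), SA za, SB zb) \<partial>PB \<partial>PA \<partial>lborel)"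
    by (intro nn_integral_cong, subst PB.nn_integral_fst[symmetric]) ((rule meas_triple[OF \<Phi>]; measurable), simp)
  also have "\<dots> = (\<integral>\<^sup>+u. \<integral>\<^sup>+za. \<integral>\<^sup>+b1. \<integral>\<^sup>+b2. \<integral>\<^sup>+b3. \<Phi> (u - b1 - b2, SA za, (b1, b2, b3))
      \<partial>normal_law 0 (real (k3 - k2) * (1 - q)) \<partial>normal_law 0 (real (k2 - k1) * (1 - q)) \<partial>normal_law 0 (real k1 * (1 - q)) \<partial>PA \<partial>lborel)"
  proof (intro nn_integral_cong)
    fix u za
    show "(\<integral>\<^sup>+zb. \<Phi> (u - fst (SB zb) - fst (snd (SB zb)), SA za, SB zb) \<partial>PB) = (\<integral>\<^sup>+b1. \<integral>\<^sup>+b2. \<integral>\<^sup>+b3. \<Phi> (u - b1 - b2, SA za, (b1, b2, b3))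
      \<partial>normal_law 0 (real (k3 - k2) * (1 - q)) \<partial>normal_law 0 (real (k2 - k1) * (1 - q)) \<partial>normal_law 0 (real k1 * (1 - q)))"
      unfolding SB_def PB_def
      using block3SS[OF k q', of "\<lambda>b. \<Phi> (u - fst b - fst (snd b), SA za, b)"] by simp
  qed
  also have "\<dots> = (\<integral>\<^sup>+u. \<integral>\<^sup>+a1. \<integral>\<^sup>+a2. \<integral>\<^sup>+a3. \<integral>\<^sup>+b1. \<integral>\<^sup>+b2. \<integral>\<^sup>+b3. \<Phi> (u - b1 - b2, (a1, a2, a3), (b1, b2, b3))
      \<partial>normal_law 0 (real (k3 - k2) * (1 - q)) \<partial>normal_law 0 (real (k2 - k1) * (1 - q)) \<partial>normal_law 0 (real k1 * (1 - q))
      \<partial>normal_law 0 (real (k3 - k2) * q) \<partial>normal_law 0 (real (k2 - k1) * q) \<partial>normal_law 0 (real k1 * q) \<partial>lborel)"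
  proof (intro nn_integral_cong)
    fix u
    show "(\<integral>\<^sup>+za. \<integral>\<^sup>+b1. \<integral>\<^sup>+b2. \<integral>\<^sup>+b3. \<Phi> (u - b1 - b2, SA za, (b1, b2, b3))
      \<partial>normal_law 0 (real (k3 - k2) * (1 - q)) \<partial>normal_law 0 (real (k2 - k1) * (1 - q)) \<partial>normal_law 0 (real k1 * (1 - q)) \<partial>PA) =
      (\<integral>\<^sup>+a1. \<integral>\<^sup>+a2. \<integral>\<^sup>+a3. \<integral>\<^sup>+b1. \<integral>\<^sup>+b2. \<integral>\<^sup>+b3. \<Phi> (u - b1 - b2, (a1, a2, a3), (b1, b2, b3))
      \<partial>normal_law 0 (real (k3 - k2) * (1 - q)) \<partial>normal_law 0 (real (k2 - k1) * (1 - q)) \<partial>normal_law 0 (real k1 * (1 - q))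
      \<partial>normal_law 0 (real (k3 - k2) * q) \<partial>normal_law 0 (real (k2 - k1) * q) \<partial>normal_law 0 (real k1 * q))"
      unfolding SA_def PA_def
      using block3SS[OF k q(1), of "\<lambda>a. \<integral>\<^sup>+b1. \<integral>\<^sup>+b2. \<integral>\<^sup>+b3. \<Phi> (u - b1 - b2, a, (b1, b2, b3))
      \<partial>normal_law 0 (real (k3 - k2) * (1 - q)) \<partial>normal_law 0 (real (k2 - k1) * (1 - q)) \<partial>normal_law 0 (real k1 * (1 - q))"] by simp
  qed
  finally show ?thesis unfolding SA_def SB_def .
qed



lemma cmult2:
  assumes [measurable]: "case_prod h \<in> borel_measurable (borel \<Otimes>\<^sub>M borel)"
  shows "(\<integral>\<^sup>+x. \<integral>\<^sup>+y. c * h x y \<partial>normal_law m2 v2 \<partial>normal_law m1 v1) = c * (\<integral>\<^sup>+x. \<integral>\<^sup>+y. h x y \<partial>normal_law m2 v2 \<partial>normal_law m1 v1)"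
proof -
  have "(\<integral>\<^sup>+x. \<integral>\<^sup>+y. c * h x y \<partial>normal_law m2 v2 \<partial>normal_law m1 v1) = (\<integral>\<^sup>+x. c * \<integral>\<^sup>+y. h x y \<partial>normal_law m2 v2 \<partial>normal_law m1 v1)"
    by (intro nn_integral_cong nn_integral_cmult) measurable
  also have "\<dots> = c * (\<integral>\<^sup>+x. \<integral>\<^sup>+y. h x y \<partial>normal_law m2 v2 \<partial>normal_law m1 v1)"
    by (rule nn_integral_cmult) measurable
  finally show ?thesis .
qed

lemma six:
  fixes G :: "real \<times> real \<times> real \<Rightarrow> ennreal" and f :: "real \<Rightarrow> ennreal"
  assumes G[measurable]: "G \<in> borel_measurable borel" and f[measurable]: "f \<in> borel_measurable borel"
    and q: "0 < q" "q < 1" and r: "0 < r1" "r1 < r2" "r2 < r3" and sa: "0 < sa" and c: "0 < c"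
    and V: "V = (sa / r1)\<^sup>2 * (r1 * q * ((r2 - r1) * q) / (r1 * q + (r2 - r1) * q)) + (sa * c)\<^sup>2 * ((r2 - r1) * (1 - q))"
  shows "(\<integral>\<^sup>+a1. \<integral>\<^sup>+a2. \<integral>\<^sup>+a3. \<integral>\<^sup>+b1. \<integral>\<^sup>+b2. \<integral>\<^sup>+b3.
        G (a1 + a2, a3, b3) * f (sa * (a1 / r1 - (a1 + a2 + a3) / r3 + c * (b2 + b3)))
      \<partial>normal_law 0 ((r3 - r2) * (1 - q)) \<partial>normal_law 0 ((r2 - r1) * (1 - q)) \<partial>normal_law 0 (r1 * (1 - q))
      \<partial>normal_law 0 ((r3 - r2) * q) \<partial>normal_law 0 ((r2 - r1) * q) \<partial>normal_law 0 (r1 * q)) =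
    (\<integral>\<^sup>+a1. \<integral>\<^sup>+a2. \<integral>\<^sup>+a3. \<integral>\<^sup>+b1. \<integral>\<^sup>+b2. \<integral>\<^sup>+b3.
        G (a1 + a2, a3, b3) * (\<integral>\<^sup>+x. f (sa * ((a1 + a2) / r2 - (a1 + a2 + a3) / r3 + c * b3) + x) \<partial>normal_law 0 V)
      \<partial>normal_law 0 ((r3 - r2) * (1 - q)) \<partial>normal_law 0 ((r2 - r1) * (1 - q)) \<partial>normal_law 0 (r1 * (1 - q))
      \<partial>normal_law 0 ((r3 - r2) * q) \<partial>normal_law 0 ((r2 - r1) * q) \<partial>normal_law 0 (r1 * q))"
  (is "?L = ?R")
proof -
  define A where "A = r1 * q"
  define B where "B = (r2 - r1) * q"
  define A3 where "A3 = (r3 - r2) * q"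
  define B1 where "B1 = r1 * (1 - q)"
  define B2 where "B2 = (r2 - r1) * (1 - q)"
  define B3 where "B3 = (r3 - r2) * (1 - q)"
  define v where "v = A * B / (A + B)"
  define c0 where "c0 = A / (A + B)"
  have pos0: "0 < A" "0 < B" "0 < A3" "0 < B1" "0 < B2" "0 < B3"
    using q r by (auto simp: A_def B_def A3_def B1_def B2_def B3_def)
  have pos: "0 < A" "0 < B" "0 < A3" "0 < B1" "0 < B2" "0 < B3" "0 < v" "0 < A + B"
    using pos0 by (auto simp: v_def)
  have nz: "B1 \<noteq> 0" "B2 \<noteq> 0" using pos by auto
  define F where "F = (\<lambda>s x. \<integral>\<^sup>+a3. \<integral>\<^sup>+b2. \<integral>\<^sup>+b3.
        G (s, a3, b3) * f (sa * (x / r1 - (s + a3) / r3 + c * (b2 + b3)))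
      \<partial>normal_law 0 B3 \<partial>normal_law 0 B2 \<partial>normal_law 0 A3)"
  define F' where "F' = (\<lambda>s. \<integral>\<^sup>+a3. \<integral>\<^sup>+b3.
        G (s, a3, b3) * (\<integral>\<^sup>+x. f (sa * (s / r2 - (s + a3) / r3 + c * b3) + x) \<partial>normal_law 0 V)
      \<partial>normal_law 0 B3 \<partial>normal_law 0 A3)"
  have L1: "?L = (\<integral>\<^sup>+a1. \<integral>\<^sup>+a2. F (a1 + a2) a1 \<partial>normal_law 0 B \<partial>normal_law 0 A)"
    unfolding F_def A_def[symmetric] B_def[symmetric] A3_def[symmetric] B1_def[symmetric] B2_def[symmetric] B3_def[symmetric]
    using nz by simp
  also have "\<dots> = (\<integral>\<^sup>+s. \<integral>\<^sup>+e. F s (e + c0 * s) \<partial>normal_law 0 v \<partial>normal_law 0 (A + B))"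
    unfolding v_def c0_def by (rule L2[OF pos(1,2)]) (unfold F_def, measurable)
  also have "\<dots> = (\<integral>\<^sup>+s. F' s \<partial>normal_law 0 (A + B))"
  proof (rule nn_integral_cong)
    fix s
    define m where "m = (\<lambda>a3 b3. sa * (s / r2 - (s + a3) / r3 + c * b3))"
    have c0: "c0 = r1 / r2" using q r by (simp add: c0_def A_def B_def field_simps)
    have arg: "sa * ((e + c0 * s) / r1 - (s + a3) / r3 + c * (b2 + b3)) = (sa / r1) * e + (sa * c) * b2 + m a3 b3" for e a3 b2 b3
      using r unfolding c0 m_def by (simp add: field_simps)
    have Veq: "V = (sa / r1)\<^sup>2 * v + (sa * c)\<^sup>2 * B2" by (simp add: V v_def A_def B_def B2_def)
    have k1: "sa / r1 \<noteq> 0" and k2: "sa * c \<noteq> 0" using sa c r by auto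
    have "(\<integral>\<^sup>+e. F s (e + c0 * s) \<partial>normal_law 0 v) =
      (\<integral>\<^sup>+e. \<integral>\<^sup>+a3. \<integral>\<^sup>+b2. \<integral>\<^sup>+b3. G (s, a3, b3) * f ((sa / r1) * e + (sa * c) * b2 + m a3 b3)
        \<partial>normal_law 0 B3 \<partial>normal_law 0 B2 \<partial>normal_law 0 A3 \<partial>normal_law 0 v)"
      unfolding F_def arg ..
    also have "\<dots> = (\<integral>\<^sup>+a3. \<integral>\<^sup>+e. \<integral>\<^sup>+b2. \<integral>\<^sup>+b3. G (s, a3, b3) * f ((sa / r1) * e + (sa * c) * b2 + m a3 b3)
        \<partial>normal_law 0 B3 \<partial>normal_law 0 B2 \<partial>normal_law 0 v \<partial>normal_law 0 A3)"
      by (rule swap_normal) (unfold m_def, measurable)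
    also have "\<dots> = (\<integral>\<^sup>+a3. \<integral>\<^sup>+e. \<integral>\<^sup>+b3. \<integral>\<^sup>+b2. G (s, a3, b3) * f ((sa / r1) * e + (sa * c) * b2 + m a3 b3)
        \<partial>normal_law 0 B2 \<partial>normal_law 0 B3 \<partial>normal_law 0 v \<partial>normal_law 0 A3)"
      by (intro nn_integral_cong swap_normal) (unfold m_def, measurable)
    also have "\<dots> = (\<integral>\<^sup>+a3. \<integral>\<^sup>+b3. \<integral>\<^sup>+e. \<integral>\<^sup>+b2. G (s, a3, b3) * f ((sa / r1) * e + (sa * c) * b2 + m a3 b3)
        \<partial>normal_law 0 B2 \<partial>normal_law 0 v \<partial>normal_law 0 B3 \<partial>normal_law 0 A3)"
      by (intro nn_integral_cong swap_normal) (unfold m_def, measurable)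
    also have "\<dots> = (\<integral>\<^sup>+a3. \<integral>\<^sup>+b3. G (s, a3, b3) * (\<integral>\<^sup>+e. \<integral>\<^sup>+b2. f ((sa / r1) * e + (sa * c) * b2 + m a3 b3)
        \<partial>normal_law 0 B2 \<partial>normal_law 0 v) \<partial>normal_law 0 B3 \<partial>normal_law 0 A3)"
      by (intro nn_integral_cong cmult2) (unfold m_def, measurable)
    also have "\<dots> = F' s"
      unfolding F'_def Veq
    proof (intro nn_integral_cong arg_cong2[where f="(*)"] refl)
      fix a3 b3
      show "(\<integral>\<^sup>+e. \<integral>\<^sup>+b2. f ((sa / r1) * e + (sa * c) * b2 + m a3 b3) \<partial>normal_law 0 B2 \<partial>normal_law 0 v) =
        (\<integral>\<^sup>+x. f (sa * (s / r2 - (s + a3) / r3 + c * b3) + x) \<partial>normal_law 0 ((sa / r1)\<^sup>2 * v + (sa * c)\<^sup>2 * B2))"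
        using N4[OF pos(7) pos(5) k1 k2 f, of "m a3 b3"] by (simp only: m_def)
    qed
    finally show "(\<integral>\<^sup>+e. F s (e + c0 * s) \<partial>normal_law 0 v) = F' s" .
  qed
  also have "\<dots> = (\<integral>\<^sup>+a1. \<integral>\<^sup>+a2. F' (a1 + a2) \<partial>normal_law 0 B \<partial>normal_law 0 A)"
    by (rule N3[OF pos(1,2), symmetric]) (unfold F'_def, measurable)
  also have "\<dots> = ?R"
    unfolding F'_def A_def[symmetric] B_def[symmetric] A3_def[symmetric] B1_def[symmetric] B2_def[symmetric] B3_def[symmetric]
    using nz by simp
  finally show ?thesis .
qed



lemma keyZ:
  fixes x0 a1 a2 a3 b1 b2 b3 q w x z :: real
  assumes "w \<noteq> 0" "x \<noteq> 0" "z \<noteq> 0" "q = 1 - w"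
  shows "(x0 + a1 + b1) / x + 1 / w * ((x0 + (b1 + b2 + b3)) / z) - (x0 + (a1 + a2 + a3) + (b1 + b2 + b3)) / z
     - (x0 + b1) * (1 / x + q / w * (1 / z)) = a1 / x - (a1 + a2 + a3) / z + q / (w * z) * (b2 + b3)"
  using assms(1-3) unfolding assms(4) by (simp add: field_simps)
lemma keyM:
  fixes x0 a1 a2 a3 b1 b2 b3 q w y z :: real
  assumes "w \<noteq> 0" "y \<noteq> 0" "z \<noteq> 0" "q = 1 - w"
  shows "(x0 + (a1 + a2) + (b1 + b2)) / y + 1 / w * ((x0 + (b1 + b2 + b3)) / z) - (x0 + (a1 + a2 + a3) + (b1 + b2 + b3)) / z
     - (x0 + (b1 + b2)) * (1 / y + q / w * (1 / z)) = (a1 + a2) / y - (a1 + a2 + a3) / z + q / (w * z) * b3"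
  using assms(1-3) unfolding assms(4) by (simp add: field_simps)
lemma keyV:
  fixes q w x y z :: real
  assumes "w \<noteq> 0" "0 < x" "x < y" "0 < z" "0 < q"
  shows "q * (y - x) * (1 / (y * x) + q / (w * z\<^sup>2)) =
    (1 / x)\<^sup>2 * (x * q * ((y - x) * q) / (y * q)) + (q / (w * z))\<^sup>2 * ((y - x) * w)"
  using assms by (simp add: field_simps power2_eq_square)

lemma sum_split:
  fixes f :: "nat \<Rightarrow> real"
  assumes "m \<le> n"
  shows "(\<Sum>i\<in>{1..n}. f i) = (\<Sum>i\<in>{1..m}. f i) + (\<Sum>i\<in>{m<..n}. f i)"
proof -
  have "{1..n} = {1..m} \<union> {m<..n}" using assms by auto
  then show ?thesis by (simp add: sum.union_disjoint ivl_disj_int)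
qed

lemma sigma2_alt: "sigma2 q T s = 1 / (1 / real s + q / (1 - q) * (1 / real T))"
  by (simp add: sigma2_def)

lemma Dpos:
  fixes q :: real
  assumes "0 < q" "q < 1" "0 < s" "0 < T"
  shows "0 < 1 / real s + q / (1 - q) * (1 / real T)"
proof -
  have "0 < q / (1 - q)" using assms by simp
  then have "0 < q / (1 - q) * (1 / real T)" using assms by simp
  moreover have "0 < 1 / real s" using assms by simp
  ultimately show ?thesis by linarith
qed

lemma alg_Z:
  fixes x0 a1 a2 a3 b1 b2 b3 q :: real
  assumes q: "0 < q" "q < 1" and p: "0 < \<tau>" "0 < T"
  shows "xstar q T \<tau> (x0 + a1 + b1) (x0 + (b1 + b2 + b3)) (x0 + (a1 + a2 + a3) + (b1 + b2 + b3)) - (x0 + b1) =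
    sigma2 q T \<tau> * (a1 / real \<tau> - (a1 + a2 + a3) / real T + q / ((1 - q) * real T) * (b2 + b3))"
proof -
  define D where "D = 1 / real \<tau> + q / (1 - q) * (1 / real T)"
  define Num where "Num = (x0 + a1 + b1) / real \<tau> + 1 / (1 - q) * ((x0 + (b1 + b2 + b3)) / real T) - (x0 + (a1 + a2 + a3) + (b1 + b2 + b3)) / real T"
  define E where "E = a1 / real \<tau> - (a1 + a2 + a3) / real T + q / ((1 - q) * real T) * (b2 + b3)"
  have D: "D \<noteq> 0" using Dpos[OF q p] unfolding D_def by simp
  have q1: "1 - q \<noteq> 0" using q by simp
  have key: "Num - (x0 + b1) * D = E"
    unfolding Num_def D_def E_def by (rule keyZ) (use q1 p in auto)
  have "Num / D - (x0 + b1) = 1 / D * E"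
    using D key by (simp add: field_simps)
  then show ?thesis unfolding xstar_def sigma2_def D_def[symmetric] Num_def[symmetric] E_def[symmetric] .
qed

lemma alg_mean:
  fixes x0 a1 a2 a3 b1 b2 b3 q :: real
  assumes q: "0 < q" "q < 1" and p: "0 < \<tau>" "0 < t" "0 < T"
  shows "sigma2 q T \<tau> / sigma2 q T t * (xstar q T t (x0 + (a1 + a2) + (b1 + b2)) (x0 + (b1 + b2 + b3)) (x0 + (a1 + a2 + a3) + (b1 + b2 + b3)) - (x0 + (b1 + b2))) =
    sigma2 q T \<tau> * ((a1 + a2) / real t - (a1 + a2 + a3) / real T + q / ((1 - q) * real T) * b3)"
proof -
  define D where "D = 1 / real t + q / (1 - q) * (1 / real T)"
  define D' where "D' = 1 / real \<tau> + q / (1 - q) * (1 / real T)"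
  define Num where "Num = (x0 + (a1 + a2) + (b1 + b2)) / real t + 1 / (1 - q) * ((x0 + (b1 + b2 + b3)) / real T) - (x0 + (a1 + a2 + a3) + (b1 + b2 + b3)) / real T"
  define E where "E = (a1 + a2) / real t - (a1 + a2 + a3) / real T + q / ((1 - q) * real T) * b3"
  have D: "D \<noteq> 0" "D' \<noteq> 0" using Dpos[OF q p(2,3)] Dpos[OF q p(1,3)] unfolding D_def D'_def by simp_all
  have q1: "1 - q \<noteq> 0" using q by simp
  have key: "Num - (x0 + (b1 + b2)) * D = E"
    unfolding Num_def D_def E_def by (rule keyM) (use q1 p in auto)
  have "(1 / D') / (1 / D) * (Num / D - (x0 + (b1 + b2))) = 1 / D' * E"
    using D key by (simp add: field_simps)
  then show ?thesis unfolding xstar_def sigma2_def D_def[symmetric] D'_def[symmetric] Num_def[symmetric] E_def[symmetric] .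
qed

lemma alg_V:
  fixes q :: real
  assumes q: "0 < q" "q < 1" and p: "0 < \<tau>" "\<tau> < t" "t < T"
  shows "q * (real t - real \<tau>) * (1 / (real t * real \<tau>) + q / ((1 - q) * (real T)\<^sup>2)) * (sigma2 q T \<tau>)\<^sup>2 =
    (sigma2 q T \<tau> / real \<tau>)\<^sup>2 * (real \<tau> * q * ((real t - real \<tau>) * q) / (real \<tau> * q + (real t - real \<tau>) * q)) +
    (sigma2 q T \<tau> * (q / ((1 - q) * real T)))\<^sup>2 * ((real t - real \<tau>) * (1 - q))"
proof -
  have q1: "1 - q \<noteq> 0" using q by simp
  define x where "x = real \<tau>"
  define y where "y = real t"
  define z where "z = real T"
  have xyz: "0 < x" "x < y" "y < z" using p by (simp_all add: x_def y_def z_def)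
  have tt: "x * q + (y - x) * q = y * q" by (simp add: algebra_simps)
  have key: "q * (y - x) * (1 / (y * x) + q / ((1 - q) * z\<^sup>2)) =
    (1 / x)\<^sup>2 * (x * q * ((y - x) * q) / (y * q)) + (q / ((1 - q) * z))\<^sup>2 * ((y - x) * (1 - q))"
    by (rule keyV) (use q1 xyz q in auto)
  have "q * (y - x) * (1 / (y * x) + q / ((1 - q) * z\<^sup>2)) * (sigma2 q T \<tau>)\<^sup>2 =
    (sigma2 q T \<tau> / x)\<^sup>2 * (x * q * ((y - x) * q) / (x * q + (y - x) * q)) +
    (sigma2 q T \<tau> * (q / ((1 - q) * z)))\<^sup>2 * ((y - x) * (1 - q))"
    unfolding tt key by (simp add: power_mult_distrib power_divide algebra_simps)
  then show ?thesis by (simp add: x_def y_def z_def)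
qed



lemma XY:
  assumes A: "SS \<tau> t T za = (a1, a2, a3)" and B: "SS \<tau> t T zb = (b1, b2, b3)" and le: "\<tau> \<le> t" "t \<le> T"
  shows "Xp \<tau> (x0, za, zb) = x0 + a1 + b1" "Yp \<tau> (x0, za, zb) = x0 + b1"
    "Xp t (x0, za, zb) = x0 + (a1 + a2) + (b1 + b2)" "Yp t (x0, za, zb) = x0 + (b1 + b2)"
    "Xp T (x0, za, zb) = x0 + (a1 + a2 + a3) + (b1 + b2 + b3)" "Yp T (x0, za, zb) = x0 + (b1 + b2 + b3)"
proof -
  have a: "a1 = (\<Sum>i\<in>{1..\<tau>}. za i)" "a2 = (\<Sum>i\<in>{\<tau><..t}. za i)" "a3 = (\<Sum>i\<in>{t<..T}. za i)"
    using A by (auto simp: SS_def)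
  have b: "b1 = (\<Sum>i\<in>{1..\<tau>}. zb i)" "b2 = (\<Sum>i\<in>{\<tau><..t}. zb i)" "b3 = (\<Sum>i\<in>{t<..T}. zb i)"
    using B by (auto simp: SS_def)
  have st: "(\<Sum>i\<in>{1..t}. z i) = (\<Sum>i\<in>{1..\<tau>}. z i) + (\<Sum>i\<in>{\<tau><..t}. z i)" for z :: "nat \<Rightarrow> real"
    using le(1) by (rule sum_split)
  have sT: "(\<Sum>i\<in>{1..T}. z i) = (\<Sum>i\<in>{1..\<tau>}. z i) + (\<Sum>i\<in>{\<tau><..t}. z i) + (\<Sum>i\<in>{t<..T}. z i)" for z :: "nat \<Rightarrow> real"
    using sum_split[OF le(2), of z] st[of z] by simp
  show "Xp \<tau> (x0, za, zb) = x0 + a1 + b1" "Yp \<tau> (x0, za, zb) = x0 + b1"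
    "Xp t (x0, za, zb) = x0 + (a1 + a2) + (b1 + b2)" "Yp t (x0, za, zb) = x0 + (b1 + b2)"
    "Xp T (x0, za, zb) = x0 + (a1 + a2 + a3) + (b1 + b2 + b3)" "Yp T (x0, za, zb) = x0 + (b1 + b2 + b3)"
    unfolding Xp_def Yp_def a b fst_conv snd_conv sum.distrib st sT by (simp_all add: algebra_simps)
qed

theorem lemma8:
  fixes Tmax \<tau> t T :: nat and q :: real
    and f :: "real \<Rightarrow> ennreal"
    and g :: "real \<times> real \<times> real \<times> real \<Rightarrow> ennreal"
  assumes "1 \<le> Tmax" and "0 < q" and "q < 1"
    and "0 < \<tau>" and "\<tau> < t" and "t < T" and "T \<le> Tmax"
    and "f \<in> borel_measurable borel" and "g \<in> borel_measurable borel"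
  shows "(\<integral>\<^sup>+ \<omega>. g (Xp t \<omega>, Yp t \<omega>, Xp T \<omega>, Yp T \<omega>) * f (Xstar q T \<tau> \<omega> - Yp \<tau> \<omega>) \<partial>Omega Tmax q)
       = (\<integral>\<^sup>+ \<omega>. g (Xp t \<omega>, Yp t \<omega>, Xp T \<omega>, Yp T \<omega>) *
            (\<integral>\<^sup>+ z. f z \<partial>normal_law
               (sigma2 q T \<tau> / sigma2 q T t * (xstar q T t (Xp t \<omega>) (Yp T \<omega>) (Xp T \<omega>) - Yp t \<omega>))
               (q * (real t - real \<tau>) * (1 / (real t * real \<tau>) + q / ((1 - q) * (real T)\<^sup>2))
                  * (sigma2 q T \<tau>)\<^sup>2))
          \<partial>Omega Tmax q)"
proof -
  note f[measurable] = assms(8) and g[measurable] = assms(9)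
  have q: "0 < q" "q < 1" using assms by auto
  have k: "0 < \<tau>" "\<tau> < t" "t < T" "T \<le> Tmax" using assms by auto
  define sa where "sa = sigma2 q T \<tau>"
  define c where "c = q / ((1 - q) * real T)"
  define V where "V = q * (real t - real \<tau>) * (1 / (real t * real \<tau>) + q / ((1 - q) * (real T)\<^sup>2)) * (sigma2 q T \<tau>)\<^sup>2"
  have sa: "0 < sa" unfolding sa_def sigma2_def using Dpos[OF q, of \<tau> T] k by simp
  have c: "0 < c" unfolding c_def using q k by simp
  define PL where "PL = (\<lambda>x0 a1 a2 a3 b1 b2 b3::real.
     g (x0 + (a1 + a2) + (b1 + b2), x0 + (b1 + b2), x0 + (a1 + a2 + a3) + (b1 + b2 + b3), x0 + (b1 + b2 + b3)) *
     f (sa * (a1 / real \<tau> - (a1 + a2 + a3) / real T + c * (b2 + b3))))"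
  define PR where "PR = (\<lambda>x0 a1 a2 a3 b1 b2 b3::real.
     g (x0 + (a1 + a2) + (b1 + b2), x0 + (b1 + b2), x0 + (a1 + a2 + a3) + (b1 + b2 + b3), x0 + (b1 + b2 + b3)) *
     (\<integral>\<^sup>+x. f (sa * ((a1 + a2) / real t - (a1 + a2 + a3) / real T + c * b3) + x) \<partial>normal_law 0 V))"
  define \<Phi>L where "\<Phi>L = (\<lambda>p::real \<times> (real \<times> real \<times> real) \<times> (real \<times> real \<times> real).
     PL (fst p) (fst (fst (snd p))) (fst (snd (fst (snd p)))) (snd (snd (fst (snd p))))
        (fst (snd (snd p))) (fst (snd (snd (snd p)))) (snd (snd (snd (snd p)))))"
  define \<Phi>R where "\<Phi>R = (\<lambda>p::real \<times> (real \<times> real \<times> real) \<times> (real \<times> real \<times> real).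
     PR (fst p) (fst (fst (snd p))) (fst (snd (fst (snd p)))) (snd (snd (fst (snd p))))
        (fst (snd (snd p))) (fst (snd (snd (snd p)))) (snd (snd (snd (snd p)))))"
  have mL: "\<Phi>L \<in> borel_measurable borel" unfolding \<Phi>L_def PL_def by measurable
  have mR: "\<Phi>R \<in> borel_measurable borel" unfolding \<Phi>R_def PR_def by measurable
  have ptL: "g (Xp t \<omega>, Yp t \<omega>, Xp T \<omega>, Yp T \<omega>) * f (Xstar q T \<tau> \<omega> - Yp \<tau> \<omega>) =
     \<Phi>L (fst \<omega>, SS \<tau> t T (fst (snd \<omega>)), SS \<tau> t T (snd (snd \<omega>)))" for \<omega>
  proof -
    obtain x0 za zb where \<omega>: "\<omega> = (x0, za, zb)" by (cases \<omega>) auto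
    obtain a1 a2 a3 where A: "SS \<tau> t T za = (a1, a2, a3)" by (cases "SS \<tau> t T za") auto
    obtain b1 b2 b3 where B: "SS \<tau> t T zb = (b1, b2, b3)" by (cases "SS \<tau> t T zb") auto
    note xy = XY[OF A B less_imp_le[OF k(2)] less_imp_le[OF k(3)], of x0] k
    show ?thesis
      unfolding \<omega> Xstar_def using xy
      by (simp add: \<Phi>L_def PL_def A B alg_Z[OF q] sa_def c_def)
  qed
  have ptR: "g (Xp t \<omega>, Yp t \<omega>, Xp T \<omega>, Yp T \<omega>) *
            (\<integral>\<^sup>+ z. f z \<partial>normal_law
               (sigma2 q T \<tau> / sigma2 q T t * (xstar q T t (Xp t \<omega>) (Yp T \<omega>) (Xp T \<omega>) - Yp t \<omega>)) V) =
     \<Phi>R (fst \<omega>, SS \<tau> t T (fst (snd \<omega>)), SS \<tau> t T (snd (snd \<omega>)))" for \<omega>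
  proof -
    obtain x0 za zb where \<omega>: "\<omega> = (x0, za, zb)" by (cases \<omega>) auto
    obtain a1 a2 a3 where A: "SS \<tau> t T za = (a1, a2, a3)" by (cases "SS \<tau> t T za") auto
    obtain b1 b2 b3 where B: "SS \<tau> t T zb = (b1, b2, b3)" by (cases "SS \<tau> t T zb") auto
    note xy = XY[OF A B less_imp_le[OF k(2)] less_imp_le[OF k(3)], of x0] k
    have tpos: "0 < t" "0 < T" using k by simp_all
    have m: "sigma2 q T \<tau> / sigma2 q T t * (xstar q T t (Xp t \<omega>) (Yp T \<omega>) (Xp T \<omega>) - Yp t \<omega>) =
      sa * ((a1 + a2) / real t - (a1 + a2 + a3) / real T + c * b3)"
      unfolding \<omega> by (simp only: xy alg_mean[OF q k(1) tpos(1) tpos(2)] sa_def c_def)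
    show ?thesis
      unfolding m normal_law_shift[OF f] unfolding \<omega> using xy
      by (simp add: \<Phi>R_def PR_def A B)
  qed
  define Gu where "Gu = (\<lambda>u p. g (u + fst p, u, u + fst p + fst (snd p) + snd (snd p), u + snd (snd p)))"
  have mG[measurable]: "Gu u \<in> borel_measurable borel" for u unfolding Gu_def by measurable
  have R6L: "\<Phi>L (u - b1 - b2, (a1, a2, a3), (b1, b2, b3)) = Gu u (a1 + a2, a3, b3) * f (sa * (a1 / real \<tau> - (a1 + a2 + a3) / real T + c * (b2 + b3)))"
    for u a1 a2 a3 b1 b2 b3
  proof -
    have "(u - b1 - b2 + (a1 + a2) + (b1 + b2), u - b1 - b2 + (b1 + b2), u - b1 - b2 + (a1 + a2 + a3) + (b1 + b2 + b3), u - b1 - b2 + (b1 + b2 + b3))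
        = (u + (a1 + a2), u, u + (a1 + a2) + a3 + b3, u + b3)" by (simp add: algebra_simps)
    then show ?thesis by (simp add: \<Phi>L_def PL_def Gu_def add.assoc)
  qed
  have R6R: "\<Phi>R (u - b1 - b2, (a1, a2, a3), (b1, b2, b3)) = Gu u (a1 + a2, a3, b3) * (\<integral>\<^sup>+x. f (sa * ((a1 + a2) / real t - (a1 + a2 + a3) / real T + c * b3) + x) \<partial>normal_law 0 V)"
    for u a1 a2 a3 b1 b2 b3
  proof -
    have "(u - b1 - b2 + (a1 + a2) + (b1 + b2), u - b1 - b2 + (b1 + b2), u - b1 - b2 + (a1 + a2 + a3) + (b1 + b2 + b3), u - b1 - b2 + (b1 + b2 + b3))
        = (u + (a1 + a2), u, u + (a1 + a2) + a3 + b3, u + b3)" by (simp add: algebra_simps)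
    then show ?thesis by (simp add: \<Phi>R_def PR_def Gu_def add.assoc)
  qed
  have eqs: "real (T - t) = real T - real t" "real (t - \<tau>) = real t - real \<tau>" using k by (simp_all add: of_nat_diff)
  have Veq: "V = (sa / real \<tau>)\<^sup>2 * (real \<tau> * q * ((real t - real \<tau>) * q) / (real \<tau> * q + (real t - real \<tau>) * q)) + (sa * c)\<^sup>2 * ((real t - real \<tau>) * (1 - q))"
    unfolding V_def sa_def c_def using alg_V[OF q k(1-3)] .
  have rpos: "0 < real \<tau>" "real \<tau> < real t" "real t < real T" using k by simp_all
  have "(\<integral>\<^sup>+ \<omega>. g (Xp t \<omega>, Yp t \<omega>, Xp T \<omega>, Yp T \<omega>) * f (Xstar q T \<tau> \<omega> - Yp \<tau> \<omega>) \<partial>Omega Tmax q)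
     = (\<integral>\<^sup>+ \<omega>. \<Phi>L (fst \<omega>, SS \<tau> t T (fst (snd \<omega>)), SS \<tau> t T (snd (snd \<omega>))) \<partial>Omega Tmax q)"
    by (simp only: ptL)
  also have "\<dots> = (\<integral>\<^sup>+u. \<integral>\<^sup>+a1. \<integral>\<^sup>+a2. \<integral>\<^sup>+a3. \<integral>\<^sup>+b1. \<integral>\<^sup>+b2. \<integral>\<^sup>+b3.
        Gu u (a1 + a2, a3, b3) * f (sa * (a1 / real \<tau> - (a1 + a2 + a3) / real T + c * (b2 + b3)))
      \<partial>normal_law 0 ((real T - real t) * (1 - q)) \<partial>normal_law 0 ((real t - real \<tau>) * (1 - q)) \<partial>normal_law 0 (real \<tau> * (1 - q))
      \<partial>normal_law 0 ((real T - real t) * q) \<partial>normal_law 0 ((real t - real \<tau>) * q) \<partial>normal_law 0 (real \<tau> * q) \<partial>lborel)"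
    unfolding R[OF mL q k] R6L eqs ..
  also have "\<dots> = (\<integral>\<^sup>+u. \<integral>\<^sup>+a1. \<integral>\<^sup>+a2. \<integral>\<^sup>+a3. \<integral>\<^sup>+b1. \<integral>\<^sup>+b2. \<integral>\<^sup>+b3.
        Gu u (a1 + a2, a3, b3) * (\<integral>\<^sup>+x. f (sa * ((a1 + a2) / real t - (a1 + a2 + a3) / real T + c * b3) + x) \<partial>normal_law 0 V)
      \<partial>normal_law 0 ((real T - real t) * (1 - q)) \<partial>normal_law 0 ((real t - real \<tau>) * (1 - q)) \<partial>normal_law 0 (real \<tau> * (1 - q))
      \<partial>normal_law 0 ((real T - real t) * q) \<partial>normal_law 0 ((real t - real \<tau>) * q) \<partial>normal_law 0 (real \<tau> * q) \<partial>lborel)"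
    by (intro nn_integral_cong six[OF mG f q rpos sa c Veq])
  also have "\<dots> = (\<integral>\<^sup>+ \<omega>. \<Phi>R (fst \<omega>, SS \<tau> t T (fst (snd \<omega>)), SS \<tau> t T (snd (snd \<omega>))) \<partial>Omega Tmax q)"
    unfolding R[OF mR q k] R6R eqs ..
  also have "\<dots> = (\<integral>\<^sup>+ \<omega>. g (Xp t \<omega>, Yp t \<omega>, Xp T \<omega>, Yp T \<omega>) *
            (\<integral>\<^sup>+ z. f z \<partial>normal_law
               (sigma2 q T \<tau> / sigma2 q T t * (xstar q T t (Xp t \<omega>) (Yp T \<omega>) (Xp T \<omega>) - Yp t \<omega>)) V) \<partial>Omega Tmax q)"
    by (simp only: ptR)
  finally show ?thesis unfolding V_def .
qed


end
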